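(* Let $n\ge2$, let $T=(n;\sigma,\delta,\tau)$ with $\sigma,\delta,\tau\in\mathbb{R}$, $\tau\ne0$ and $\sigma=-\tau$ (a real shifted skew-symmetric tridiagonal Toeplitz matrix). Let $\varepsilon\in\mathbb{R}$ and let $E=(n;-e_1,e_0,e_1)$ with $e_0,e_1\in\mathbb{R}$ be such that $\tau+\varepsilon e_1$ is nonzero and has the same sign as $\tau$. Then for each $h=1,\dots,n$ the unit eigenvector $\widetilde x_h$ of $T$ and the corresponding unit eigenvector $\widetilde x_h^\varepsilon$ of $T+\varepsilon E$ satisfy $\cos\theta_{\widetilde x_h,\widetilde x_h^\varepsilon}=1$; i.e. the eigenvectors are perfectly conditioned with respect to structured perturbations preserving skew-symmetry and the signs of the off-diagonals.
   Context: $(n;\sigma,\delta,\tau)$ denotes the $n\times n$ tridiagonal Toeplitz matrix with diagonal $\delta$, superdiagonal $\tau$, subdiagonal $\sigma$. For $\sigma\tau\ne0$, the eigenvector associated with $\lambda_h=\delta+2\sqrt{\sigma\tau}\cos\frac{h\pi}{n+1}$ has components $(\sqrt{\sigma/\tau})^k\sin\frac{hk\pi}{n+1}$, $k=1,\dots,n$. For unit vectors $x,x'$, $\cos\theta_{x,x'}=|x^Hx'|$. *)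

theory Defs
  imports Complex_Main "Jordan_Normal_Form.Matrix" "Jordan_Normal_Form.Char_Poly"
begin

definition tridiag_toeplitz :: "nat \<Rightarrow> complex \<Rightarrow> complex \<Rightarrow> complex \<Rightarrow> complex mat" where
  "tridiag_toeplitz n \<sigma> \<delta> \<tau> = mat n n (\<lambda>(i,j).
     if i = j then \<delta> else if i = j + 1 then \<sigma> else if j = i + 1 then \<tau> else 0)"

definition tt_eigenvalue :: "nat \<Rightarrow> complex \<Rightarrow> complex \<Rightarrow> complex \<Rightarrow> nat \<Rightarrow> complex" where
  "tt_eigenvalue n \<sigma> \<delta> \<tau> h =
     \<delta> + 2 * csqrt (\<sigma> * \<tau>) * of_real (cos (real h * pi / real (n + 1)))"

definition unit_cvec :: "complex vec \<Rightarrow> bool" where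
  "unit_cvec x \<longleftrightarrow> x \<bullet>c x = 1"

definition cos_angle :: "complex vec \<Rightarrow> complex vec \<Rightarrow> real" where
  "cos_angle x x' = cmod (x' \<bullet>c x)"

end

theory Submission
  imports Defs
begin

lemma csq: "csqrt (complex_of_real (-t) * complex_of_real t) = \<i> * complex_of_real \<bar>t\<bar>"
proof -
  have "complex_of_real (-t) * complex_of_real t = complex_of_real (- (t*t))" by simp
  also have "csqrt \<dots> = \<i> * complex_of_real (sqrt \<bar>- (t*t)\<bar>)"
    by (subst csqrt_of_real_nonpos) auto
  finally show ?thesis by (simp add: real_sqrt_abs2)
qed

lemma mult_tt:
  assumes x: "x \<in> carrier_vec n" and i: "i < n"
  shows "(tridiag_toeplitz n s d t *\<^sub>v x) $ i =
    (if 0 < i then s * x $ (i-1) else 0) + d * x $ i + (if i+1 < n then t * x $ (i+1) else 0)"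
proof -
  have "(tridiag_toeplitz n s d t *\<^sub>v x) $ i = (\<Sum>j\<in>{0..<n}. (if i = j then d else if i = j + 1 then s else if j = i + 1 then t else 0) * x $ j)"
    using x i by (simp add: tridiag_toeplitz_def scalar_prod_def)
  also have "\<dots> = (\<Sum>j\<in>{0..<n}. (if i = j then d * x $ j else 0) + (if j = i - 1 \<and> 0 < i then s * x $ j else 0) + (if j = i + 1 then t * x $ j else 0))"
    by (rule sum.cong) auto
  also have "\<dots> = (if 0 < i then s * x $ (i-1) else 0) + d * x $ i + (if i+1 < n then t * x $ (i+1) else 0)"
    using i by (simp add: sum.distrib sum.delta sum.delta')
  finally show ?thesis .
qed

definition recs :: "complex \<Rightarrow> nat \<Rightarrow> (nat \<Rightarrow> complex) \<Rightarrow> bool" where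
  "recs b n f \<longleftrightarrow> (\<forall>i<n. (if 0 < i then - f (i-1) else 0) + (if i+1 < n then f (i+1) else 0) = b * f i)"

lemma eig_iff:
  fixes t :: real
  assumes t: "t \<noteq> 0"
  shows "eigenvector (tridiag_toeplitz n (complex_of_real (-t)) d (complex_of_real t)) x
           (d + 2 * csqrt (complex_of_real (-t) * complex_of_real t) * c)
     \<longleftrightarrow> x \<in> carrier_vec n \<and> x \<noteq> 0\<^sub>v n \<and> recs (2 * \<i> * of_real (sgn t) * c) n (\<lambda>j. x $ j)"
proof -
  have dim: "dim_row (tridiag_toeplitz n a b e) = n" for a b e by (simp add: tridiag_toeplitz_def)
  have key: "(tridiag_toeplitz n (complex_of_real (-t)) d (complex_of_real t) *\<^sub>v x) $ i =
        ((d + 2 * csqrt (complex_of_real (-t) * complex_of_real t) * c) \<cdot>\<^sub>v x) $ i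
     \<longleftrightarrow> (if 0 < i then - x $ (i-1) else 0) + (if i+1 < n then x $ (i+1) else 0) = 2 * \<i> * of_real (sgn t) * c * x $ i"
    if x: "x \<in> carrier_vec n" and i: "i < n" for i
  proof -
    let ?S = "(if 0 < i then - x $ (i-1) else 0) + (if i+1 < n then x $ (i+1) else 0)"
    have l: "(tridiag_toeplitz n (complex_of_real (-t)) d (complex_of_real t) *\<^sub>v x) $ i = complex_of_real t * ?S + d * x $ i"
      using x i by (simp add: mult_tt algebra_simps)
    have r: "((d + 2 * csqrt (complex_of_real (-t) * complex_of_real t) * c) \<cdot>\<^sub>v x) $ i
        = complex_of_real t * (2 * \<i> * of_real (sgn t) * c * x $ i) + d * x $ i"
    proof -
      have "complex_of_real \<bar>t\<bar> = complex_of_real t * of_real (sgn t)"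
        by (metis abs_sgn mult.commute of_real_mult)
      then show ?thesis using x i by (simp add: csq algebra_simps)
    qed
    have t': "complex_of_real t \<noteq> 0" using t by simp
    show ?thesis unfolding l r using t' by simp
  qed
  show ?thesis
  proof
    assume ev: "eigenvector (tridiag_toeplitz n (complex_of_real (-t)) d (complex_of_real t)) x
           (d + 2 * csqrt (complex_of_real (-t) * complex_of_real t) * c)"
    hence x: "x \<in> carrier_vec n" "x \<noteq> 0\<^sub>v n" and eq: "tridiag_toeplitz n (complex_of_real (-t)) d (complex_of_real t) *\<^sub>v x = (d + 2 * csqrt (complex_of_real (-t) * complex_of_real t) * c) \<cdot>\<^sub>v x"
      unfolding eigenvector_def dim by auto
    show "x \<in> carrier_vec n \<and> x \<noteq> 0\<^sub>v n \<and> recs (2 * \<i> * of_real (sgn t) * c) n (\<lambda>j. x $ j)"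
      using x key[OF x(1)] eq unfolding recs_def by auto
  next
    assume h: "x \<in> carrier_vec n \<and> x \<noteq> 0\<^sub>v n \<and> recs (2 * \<i> * of_real (sgn t) * c) n (\<lambda>j. x $ j)"
    have "tridiag_toeplitz n (complex_of_real (-t)) d (complex_of_real t) *\<^sub>v x = (d + 2 * csqrt (complex_of_real (-t) * complex_of_real t) * c) \<cdot>\<^sub>v x"
      apply (rule eq_vecI)
      using h key[of i for i] unfolding recs_def by (auto simp: tridiag_toeplitz_def)
    then show "eigenvector (tridiag_toeplitz n (complex_of_real (-t)) d (complex_of_real t)) x
           (d + 2 * csqrt (complex_of_real (-t) * complex_of_real t) * c)"
      using h unfolding eigenvector_def dim by auto
  qed
qed

lemma recs_zero:
  assumes "recs b n f" "f 0 = 0" "k < n"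
  shows "f k = 0"
proof -
  have "\<forall>k. k + 1 < n \<longrightarrow> f k = 0 \<and> f (k+1) = 0"
  proof
    fix k show "k + 1 < n \<longrightarrow> f k = 0 \<and> f (k+1) = 0"
    proof (induction k)
      case 0
      then show ?case using assms(1,2) unfolding recs_def by (auto dest: spec[of _ 0])
    next
      case (Suc k)
      show ?case
      proof
        assume k: "Suc k + 1 < n"
        with Suc have "f k = 0" "f (k+1) = 0" by auto
        moreover have "- f k + f (k+2) = b * f (k+1)"
          using assms(1) k unfolding recs_def by (auto dest: spec[of _ "k+1"])
        ultimately show "f (Suc k) = 0 \<and> f (Suc k + 1) = 0" by simp
      qed
    qed
  qed
  note * = this
  show ?thesis
  proof (cases k)
    case 0 then show ?thesis using assms(2) by simp
  next
    case (Suc m) then show ?thesis using *[rule_format, of m] assms(3) by auto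
  qed
qed

lemma recs_lin:
  assumes "recs b n f" "recs b n g"
  shows "recs b n (\<lambda>j. p * f j - q * g j)"
  unfolding recs_def
proof (intro allI impI)
  fix i assume i: "i < n"
  let ?L = "\<lambda>f. (if 0 < i then - f (i-1) else 0) + (if i+1 < n then f (i+1) else 0)"
  have A: "?L f = b * f i" and B: "?L g = b * g i" using assms i unfolding recs_def by auto
  have "?L (\<lambda>j. p * f j - q * g j) = p * ?L f - q * ?L g" by (simp add: algebra_simps)
  also have "\<dots> = b * (p * f i - q * g i)" unfolding A B by (simp add: algebra_simps)
  finally show "?L (\<lambda>j. p * f j - q * g j) = b * (p * f i - q * g i)" .
qed

lemma recs_unique:
  assumes x: "x \<in> carrier_vec n" "x \<noteq> 0\<^sub>v n" "recs b n (\<lambda>j. x $ j)"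
    and y: "y \<in> carrier_vec n" "recs b n (\<lambda>j. y $ j)"
  shows "\<exists>c. y = c \<cdot>\<^sub>v x"
proof -
  have x0: "x $ 0 \<noteq> 0"
  proof
    assume "x $ 0 = 0"
    hence "\<forall>k<n. x $ k = 0" using recs_zero[OF x(3)] by blast
    hence "x = 0\<^sub>v n" using x(1) by (intro eq_vecI) auto
    with x(2) show False by simp
  qed
  have r: "recs b n (\<lambda>j. x $ 0 * y $ j - y $ 0 * x $ j)" by (rule recs_lin[OF y(2) x(3)])
  have "\<forall>k<n. x $ 0 * y $ k - y $ 0 * x $ k = 0" using recs_zero[OF r] by simp
  hence "y = (y $ 0 / x $ 0) \<cdot>\<^sub>v x" using x(1) y(1) x0
    by (intro eq_vecI) (auto simp: field_simps)
  then show ?thesis by blast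
qed

lemma cos_one:
  assumes x: "x \<in> carrier_vec n" and ux: "unit_cvec x" and uy: "unit_cvec y" and y: "y = c \<cdot>\<^sub>v x"
  shows "cos_angle x y = 1"
proof -
  have cx: "conjugate x \<in> carrier_vec n" using x by simp
  have "y \<bullet>c x = c" using ux x cx unfolding y unit_cvec_def by simp
  moreover have "y \<bullet>c y = c * cnj c" using ux x cx unfolding y unit_cvec_def
    by (simp add: conjugate_smult_vec)
  moreover have "c * cnj c = complex_of_real ((cmod c)^2)"
    using complex_norm_square[of c] by simp
  ultimately have "complex_of_real ((cmod c)^2) = 1" and "cos_angle x y = cmod c"
    using uy unfolding cos_angle_def unit_cvec_def by simp_all
  then have "(cmod c)^2 = 1" and "cos_angle x y = cmod c" using of_real_eq_1_iff by blast+
  then show ?thesis using norm_ge_zero[of c] by (auto simp: power2_eq_1_iff)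
qed

lemma normalize:
  assumes w: "w \<in> carrier_vec n" "w \<noteq> 0\<^sub>v n"
  shows "\<exists>a. a \<noteq> 0 \<and> unit_cvec (a \<cdot>\<^sub>v w)"
proof -
  define N where "N = (\<Sum>k<n. (cmod (w $ k))^2)"
  obtain k where k: "k < n" "w $ k \<noteq> 0" using w by (metis eq_vecI carrier_vecD index_zero_vec)
  have "(cmod (w $ k))^2 \<le> N" unfolding N_def
    by (rule member_le_sum) (use k in auto)
  moreover have "(cmod (w $ k))^2 > 0" using k by simp
  ultimately have N: "N > 0" by linarith
  define a where "a = complex_of_real (1 / sqrt N)"
  have "(a \<cdot>\<^sub>v w) \<bullet>c (a \<cdot>\<^sub>v w) = (\<Sum>k<n. a * w $ k * cnj (a * w $ k))"
    using w by (simp add: scalar_prod_def lessThan_atLeast0)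
  also have "\<dots> = (\<Sum>k<n. complex_of_real ((1 / sqrt N)^2 * (cmod (w $ k))^2))"
  proof (rule sum.cong)
    fix k
    have "a * w $ k * cnj (a * w $ k) = (a * cnj a) * (w $ k * cnj (w $ k))" by (simp add: mult_ac)
    also have "\<dots> = complex_of_real ((1 / sqrt N)^2) * complex_of_real ((cmod (w $ k))^2)"
    proof -
      have h1: "a * cnj a = complex_of_real ((1 / sqrt N)^2)" by (simp only: a_def complex_cnj_complex_of_real of_real_mult[symmetric] power2_eq_square)
      have h2: "w $ k * cnj (w $ k) = complex_of_real ((cmod (w $ k))^2)"
        using complex_norm_square[of "w $ k"] by simp
      show ?thesis unfolding h1 h2 ..
    qed
    finally show "a * w $ k * cnj (a * w $ k) = complex_of_real ((1 / sqrt N)^2 * (cmod (w $ k))^2)" by simp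
  qed simp
  also have "\<dots> = complex_of_real ((1 / sqrt N)^2 * N)" by (simp add: N_def sum_distrib_left)
  also have "\<dots> = 1" using N by (simp add: power_divide)
  finally have U: "(a \<cdot>\<^sub>v w) \<bullet>c (a \<cdot>\<^sub>v w) = 1" .
  have "a \<noteq> 0" using N by (simp add: a_def)
  with U show ?thesis unfolding unit_cvec_def by blast
qed

lemma sin_rec: "sin (real i * th) + sin (real (i+2) * th) = 2 * cos th * sin (real (i+1) * th)"
proof -
  have a: "real i * th = real (i+1) * th - th" and b: "real (i+2) * th = real (i+1) * th + th"
    by (simp_all add: algebra_simps)
  show ?thesis unfolding a b sin_add sin_diff by simp
qed

lemma exists_rec:
  fixes t :: real
  assumes t: "t \<noteq> 0" and h: "1 \<le> h" "h \<le> n"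
  shows "\<exists>v. v \<in> carrier_vec n \<and> v \<noteq> 0\<^sub>v n \<and>
     recs (2 * \<i> * of_real (sgn t) * of_real (cos (real h * pi / real (n + 1)))) n (\<lambda>j. v $ j)"
proof -
  define th where "th = real h * pi / real (n + 1)"
  define r where "r = \<i> * complex_of_real (sgn t)"
  define S where "S = (\<lambda>k::nat. complex_of_real (sin (real k * th)))"
  define v where "v = vec n (\<lambda>k. r ^ (k+1) * S (k+1))"
  have r2: "r ^ 2 = -1" using t unfolding r_def by (simp add: power_mult_distrib sgn_if)
  have S0: "S 0 = 0" by (simp add: S_def)
  have Sn: "S (n+1) = 0"
  proof -
    have "real (n+1) * th = real h * pi" unfolding th_def by simp
    then show ?thesis unfolding S_def by (simp add: sin_npi)
  qed
  have SR: "S i + S (i+2) = 2 * complex_of_real (cos th) * S (i+1)" for i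
    unfolding S_def using sin_rec[of i th] by (metis of_real_add of_real_mult of_real_numeral)
  have "recs (2 * r * complex_of_real (cos th)) n (\<lambda>j. v $ j)"
    unfolding recs_def
  proof (intro allI impI)
    fix i assume i: "i < n"
    have t1: "(if 0 < i then - v $ (i-1) else 0) = - (r ^ i) * S i"
    proof (cases i)
      case 0 then show ?thesis using S0 by simp
    next
      case (Suc m) then show ?thesis using i by (simp add: v_def)
    qed
    have t2: "(if i+1 < n then v $ (i+1) else 0) = r ^ (i+2) * S (i+2)"
    proof (cases "i + 1 < n")
      case True then show ?thesis by (simp add: v_def)
    next
      case False then have "i + 1 = n" using i by simp
      then show ?thesis using Sn by simp
    qed
    have p1: "r ^ (i+2) = - (r ^ i)"
    proof -
      have "r ^ (i+2) = r ^ 2 * r ^ i" by (simp add: power_add power2_eq_square mult.commute)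
      then show ?thesis using r2 by simp
    qed
    have p2: "r * r ^ (i+1) = - (r ^ i)"
    proof -
      have "r * r ^ (i+1) = r ^ 2 * r ^ i" by (simp add: power2_eq_square)
      then show ?thesis using r2 by simp
    qed
    have "- (r ^ i) * S i + r ^ (i+2) * S (i+2) = - (r ^ i) * (S i + S (i+2))" unfolding p1 by (simp add: algebra_simps)
    also have "\<dots> = 2 * r * complex_of_real (cos th) * (r ^ (i+1) * S (i+1))"
    proof -
      have "2 * r * complex_of_real (cos th) * (r ^ (i+1) * S (i+1)) = (2 * complex_of_real (cos th) * S (i+1)) * (r * r ^ (i+1))"
        by (simp only: mult_ac)
      also have "\<dots> = - (r ^ i) * (S i + S (i+2))" unfolding p2 SR by (simp only: mult_ac mult_minus_right mult_minus_left)
      finally show ?thesis by simp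
    qed
    finally show "(if 0 < i then - v $ (i-1) else 0) + (if i+1 < n then v $ (i+1) else 0) = 2 * r * complex_of_real (cos th) * v $ i"
      unfolding t1 t2 using i by (simp add: v_def)
  qed
  moreover have "v \<noteq> 0\<^sub>v n"
  proof
    assume "v = 0\<^sub>v n"
    hence "v $ 0 = 0" using h by simp
    moreover have "r \<noteq> 0" using t unfolding r_def by (simp add: sgn_if)
    moreover have "sin th \<noteq> 0"
    proof -
      have "0 < th" unfolding th_def using h by simp
      moreover have "th < pi"
      proof -
        have "real h < real (n + 1)" using h by simp
        then have "real h * pi < real (n + 1) * pi" by simp
        then show ?thesis unfolding th_def by (simp add: divide_less_eq)
      qed
      ultimately show ?thesis using sin_gt_zero by force
    qed
    ultimately show False using h by (simp add: v_def S_def)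
  qed
  moreover have "v \<in> carrier_vec n" by (simp add: v_def)
  moreover have "2 * r * complex_of_real (cos th) = 2 * \<i> * of_real (sgn t) * of_real (cos (real h * pi / real (n + 1)))"
    unfolding r_def th_def by (simp only: mult.assoc)
  ultimately show ?thesis by metis
qed
lemma recs_cong:
  assumes "\<forall>j<n. f j = g j" "recs b n f"
  shows "recs b n g"
  unfolding recs_def
proof (intro allI impI)
  fix i assume i: "i < n"
  have A: "(if 0 < i then - f (i-1) else 0) + (if i+1 < n then f (i+1) else 0) = b * f i"
    using assms(2) i unfolding recs_def by blast
  have e1: "(if 0 < i then - f (i-1) else 0) = (if 0 < i then - g (i-1) else 0)" using assms(1) i by auto
  have e2: "(if i+1 < n then f (i+1) else 0) = (if i+1 < n then g (i+1) else 0)" using assms(1) by auto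
  show "(if 0 < i then - g (i-1) else 0) + (if i+1 < n then g (i+1) else 0) = b * g i"
    using A e1 e2 assms(1) i by simp
qed

lemma recs_smult: "recs b n f \<Longrightarrow> recs b n (\<lambda>j. a * f j)"
  using recs_lin[of b n f f a 0] by simp

theorem corollary2:
  fixes n :: nat and \<sigma> \<delta> \<tau> \<epsilon> e0 e1 :: real
  assumes "n \<ge> 2"
    and "\<tau> \<noteq> 0" and "\<sigma> = - \<tau>"
    and "\<tau> + \<epsilon> * e1 \<noteq> 0" and "sgn (\<tau> + \<epsilon> * e1) = sgn \<tau>"
  defines "T \<equiv> tridiag_toeplitz n (of_real \<sigma>) (of_real \<delta>) (of_real \<tau>)"
    and "E \<equiv> tridiag_toeplitz n (of_real (- e1)) (of_real e0) (of_real e1)"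
  shows "\<forall>h \<in> {1..n}.
     let lam = tt_eigenvalue n (of_real \<sigma>) (of_real \<delta>) (of_real \<tau>) h;
         lamE = tt_eigenvalue n (of_real (\<sigma> - \<epsilon> * e1)) (of_real (\<delta> + \<epsilon> * e0))
                 (of_real (\<tau> + \<epsilon> * e1)) h
     in (\<exists>x. eigenvector T x lam \<and> unit_cvec x)
      \<and> (\<exists>x'. eigenvector (T + complex_of_real \<epsilon> \<cdot>\<^sub>m E) x' lamE \<and> unit_cvec x')
      \<and> (\<forall>x x'. eigenvector T x lam \<and> unit_cvec x
               \<and> eigenvector (T + complex_of_real \<epsilon> \<cdot>\<^sub>m E) x' lamE \<and> unit_cvec x'
               \<longrightarrow> cos_angle x x' = 1)"
proof -
  define t' where "t' = \<tau> + \<epsilon> * e1"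
  have sg: "sgn t' = sgn \<tau>" using assms(5) unfolding t'_def .
  have t'0: "t' \<noteq> 0" using assms(4) unfolding t'_def .
  have T: "T = tridiag_toeplitz n (complex_of_real (- \<tau>)) (complex_of_real \<delta>) (complex_of_real \<tau>)"
    unfolding T_def using assms(3) by simp
  have T': "T + complex_of_real \<epsilon> \<cdot>\<^sub>m E = tridiag_toeplitz n (complex_of_real (- t')) (complex_of_real (\<delta> + \<epsilon> * e0)) (complex_of_real t')"
    unfolding T_def E_def t'_def assms(3)
    by (rule eq_matI) (auto simp: tridiag_toeplitz_def algebra_simps)
  show ?thesis
  proof
    fix h assume h: "h \<in> {1..n}"
    define c where "c = complex_of_real (cos (real h * pi / real (n + 1)))"
    define b where "b = 2 * \<i> * complex_of_real (sgn \<tau>) * c"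
    define P where "P = (\<lambda>x. x \<in> carrier_vec n \<and> x \<noteq> 0\<^sub>v n \<and> recs b n (\<lambda>j. x $ j))"
    have lam: "tt_eigenvalue n (of_real \<sigma>) (of_real \<delta>) (of_real \<tau>) h
       = complex_of_real \<delta> + 2 * csqrt (complex_of_real (-\<tau>) * complex_of_real \<tau>) * c"
      unfolding tt_eigenvalue_def c_def assms(3) by simp
    have lamE: "tt_eigenvalue n (of_real (\<sigma> - \<epsilon> * e1)) (of_real (\<delta> + \<epsilon> * e0)) (of_real (\<tau> + \<epsilon> * e1)) h
       = complex_of_real (\<delta> + \<epsilon> * e0) + 2 * csqrt (complex_of_real (-t') * complex_of_real t') * c"
    proof -
      have "\<sigma> - \<epsilon> * e1 = - t'" unfolding t'_def assms(3) by simp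
      then show ?thesis unfolding tt_eigenvalue_def c_def t'_def by simp
    qed
    have EV: "eigenvector T x (tt_eigenvalue n (of_real \<sigma>) (of_real \<delta>) (of_real \<tau>) h) \<longleftrightarrow> P x" for x
      unfolding T lam eig_iff[OF assms(2)] P_def b_def ..
    have EV': "eigenvector (T + complex_of_real \<epsilon> \<cdot>\<^sub>m E) x (tt_eigenvalue n (of_real (\<sigma> - \<epsilon> * e1)) (of_real (\<delta> + \<epsilon> * e0)) (of_real (\<tau> + \<epsilon> * e1)) h) \<longleftrightarrow> P x" for x
      unfolding T' lamE eig_iff[OF t'0] P_def b_def sg ..
    have ex: "\<exists>x. P x \<and> unit_cvec x"
    proof -
      obtain v where v: "v \<in> carrier_vec n" "v \<noteq> 0\<^sub>v n" "recs b n (\<lambda>j. v $ j)"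
        using exists_rec[OF assms(2), of h n] h unfolding b_def c_def by auto
      obtain a where a: "a \<noteq> 0" "unit_cvec (a \<cdot>\<^sub>v v)" using normalize[OF v(1,2)] by blast
      have "a \<cdot>\<^sub>v v \<noteq> 0\<^sub>v n"
      proof
        assume "a \<cdot>\<^sub>v v = 0\<^sub>v n"
        hence "(a \<cdot>\<^sub>v v) \<bullet>c (a \<cdot>\<^sub>v v) = 0" by simp
        with a(2) show False unfolding unit_cvec_def by simp
      qed
      moreover have "recs b n (\<lambda>j. (a \<cdot>\<^sub>v v) $ j)"
        by (rule recs_cong[OF _ recs_smult[OF v(3), of a]]) (use v(1) in auto)
      ultimately show ?thesis using v(1) a(2) unfolding P_def by (intro exI[of _ "a \<cdot>\<^sub>v v"]) auto
    qed
    have cs: "cos_angle x x' = 1" if H: "P x" "unit_cvec x" "P x'" "unit_cvec x'" for x x'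
    proof -
      obtain k where "x' = k \<cdot>\<^sub>v x" using recs_unique[of x n b x'] H unfolding P_def by blast
      then show ?thesis using cos_one[of x n] H unfolding P_def by blast
    qed
    show "let lam = tt_eigenvalue n (of_real \<sigma>) (of_real \<delta>) (of_real \<tau>) h;
         lamE = tt_eigenvalue n (of_real (\<sigma> - \<epsilon> * e1)) (of_real (\<delta> + \<epsilon> * e0))
                 (of_real (\<tau> + \<epsilon> * e1)) h
     in (\<exists>x. eigenvector T x lam \<and> unit_cvec x)
      \<and> (\<exists>x'. eigenvector (T + complex_of_real \<epsilon> \<cdot>\<^sub>m E) x' lamE \<and> unit_cvec x')
      \<and> (\<forall>x x'. eigenvector T x lam \<and> unit_cvec x
               \<and> eigenvector (T + complex_of_real \<epsilon> \<cdot>\<^sub>m E) x' lamE \<and> unit_cvec x'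
               \<longrightarrow> cos_angle x x' = 1)"
      unfolding Let_def EV EV' using ex cs by blast
  qed
qed

end
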